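(* In the single-item all-pay auction with budgets described in the context, let $L=\min\{B_1,B_2,v_1,v_2\}$. In a Nash equilibrium $(F_1,F_2)$, if for some $i\in\{1,2\}$ we have $\underline{x}_i<\overline{x}_i$ and $\underline{x}_{-i}=\overline{x}_{-i}$, then $Supp(F_i)=\{0,L\}$ and $F_i(0)\le 1-\frac{2L}{v_{-i}}$. Moreover, player $i$'s expected utility is $0$ and player $-i$'s expected utility is at most $v_{-i}-2L$.
   Context: Single-item all-pay auction with budgets. There are two players $i\in\{1,2\}$; $-i$ denotes the opponent of $i$. Player $i$ has budget $B_i\ge 0$ and valuation $v_i>0$ for a single item. A pure strategy of player $i$ is a bid $x_i\in[0,B_i]$; a mixed strategy is a probability distribution on $[0,B_i]$, described by its cumulative distribution function $F_i$. The player with the higher bid wins the item. Tie-breaking: if $x_1=x_2=\min\{B_1,B_2,v_1,v_2\}$ and $\min\{B_i,v_i\}>\min\{B_{-i},v_{-i}\}$ for some $i$, then player $i$ wins; in all other ties each player wins with probability $\frac12$. Player $i$'s utility is $v_i-x_i$ if he wins and $-x_i$ if he loses. A Nash equilibrium is a pair $(F_1,F_2)$ such that each $F_i$ maximizes player $i$'s expected utility against $F_{-i}$ over all mixed strategies on $[0,B_i]$. $Supp(F_i)$ is the support of $F_i$, $\overline{x}_i=\sup Supp(F_i)$ and $\underline{x}_i=\inf Supp(F_i)$. *)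

theory Defs
  imports "HOL-Probability.Probability"
begin

text \<open>Two players indexed by 1 and 2; the opponent of i is 3 - i.
  B and v give budgets and valuations of the players.\<close>

definition opp :: "nat \<Rightarrow> nat" where
  "opp i = 3 - i"

definition Lval :: "(nat \<Rightarrow> real) \<Rightarrow> (nat \<Rightarrow> real) \<Rightarrow> real" where
  "Lval B v = min (min (B 1) (B 2)) (min (v 1) (v 2))"

definition win :: "(nat \<Rightarrow> real) \<Rightarrow> (nat \<Rightarrow> real) \<Rightarrow> nat \<Rightarrow> real \<Rightarrow> real \<Rightarrow> real" where
  "win B v i x y =
     (if y < x then 1
      else if x < y then 0
      else if x = Lval B v \<and> min (B i) (v i) > min (B (opp i)) (v (opp i)) then 1
      else if x = Lval B v \<and> min (B (opp i)) (v (opp i)) > min (B i) (v i) then 0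
      else 1/2)"

definition util :: "(nat \<Rightarrow> real) \<Rightarrow> (nat \<Rightarrow> real) \<Rightarrow> nat \<Rightarrow> real \<Rightarrow> real \<Rightarrow> real" where
  "util B v i x y = v i * win B v i x y - x"

definition mixed_strategy :: "(nat \<Rightarrow> real) \<Rightarrow> nat \<Rightarrow> real measure \<Rightarrow> bool" where
  "mixed_strategy B i G \<longleftrightarrow>
     prob_space G \<and> sets G = sets borel \<and> measure G {0..B i} = 1"

definition exp_util :: "(nat \<Rightarrow> real) \<Rightarrow> (nat \<Rightarrow> real) \<Rightarrow> nat \<Rightarrow> real measure \<Rightarrow> real measure \<Rightarrow> real" where
  "exp_util B v i G H = (\<integral>z. util B v i (fst z) (snd z) \<partial>(pair_measure G H))"

definition nash_eq :: "(nat \<Rightarrow> real) \<Rightarrow> (nat \<Rightarrow> real) \<Rightarrow> (nat \<Rightarrow> real measure) \<Rightarrow> bool" where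
  "nash_eq B v F \<longleftrightarrow>
     (\<forall>i\<in>{1,2}. mixed_strategy B i (F i) \<and>
        (\<forall>G. mixed_strategy B i G \<longrightarrow>
              exp_util B v i G (F (opp i)) \<le> exp_util B v i (F i) (F (opp i))))"

definition supp :: "real measure \<Rightarrow> real set" where
  "supp G = {x. \<forall>e>0. measure G {x - e<..<x + e} > 0}"

definition cdf_of :: "real measure \<Rightarrow> real \<Rightarrow> real" where
  "cdf_of G t = measure G {..t}"

end

theory Submission
  imports Defs
begin


lemma supp_compact:
  assumes "prob_space M" "sets M = sets borel" "compact K" "K \<inter> supp M = {}"
  shows "measure M K = 0"
proof -
  interpret prob_space M by fact
  have "\<forall>x\<in>K. \<exists>e>0. measure M {x - e<..<x + e} = 0"
  proof
    fix x assume "x \<in> K"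
    then have "x \<notin> supp M" using assms(4) by auto
    then obtain e where "e > 0" "\<not> measure M {x - e<..<x + e} > 0"
      unfolding supp_def by auto
    then show "\<exists>e>0. measure M {x - e<..<x + e} = 0"
      using measure_nonneg[of M] by (metis linorder_neqE_linordered_idom not_less)
  qed
  then obtain e where e: "\<And>x. x \<in> K \<Longrightarrow> e x > 0 \<and> measure M {x - e x<..<x + e x} = 0"
    by metis
  have cov: "K \<subseteq> (\<Union>x\<in>K. {x - e x<..<x + e x})"
    using e by fastforce
  obtain C where C: "C \<subseteq> K" "finite C" "K \<subseteq> (\<Union>x\<in>C. {x - e x<..<x + e x})"
    by (rule compactE_image[OF assms(3) _ cov]) auto
  have "measure M K \<le> measure M (\<Union>x\<in>C. {x - e x<..<x + e x})"
    using C assms(2) by (intro finite_measure_mono) (auto simp: sets_eq_imp_space_eq)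
  also have "\<dots> \<le> (\<Sum>x\<in>C. measure M {x - e x<..<x + e x})"
    using C assms(2) by (intro finite_measure_subadditive_finite) auto
  also have "\<dots> = 0" using C e by (intro sum.neutral) auto
  finally show ?thesis using measure_nonneg[of M K] by linarith
qed

lemma supp_sub:
  assumes "prob_space M" "sets M = sets borel" "measure M {0..b} = 1"
  shows "supp M \<subseteq> {0..b}"
proof
  interpret prob_space M by fact
  fix x assume x: "x \<in> supp M"
  show "x \<in> {0..b}"
  proof (rule ccontr)
    assume nx: "x \<notin> {0..b}"
    define e where "e = (if x < 0 then -x else x - b)"
    have e0: "e > 0" using nx unfolding e_def by auto
    have disj: "{x - e<..<x + e} \<inter> {0..b} = {}" using nx unfolding e_def by auto
    have "measure M ({x - e<..<x + e} \<union> {0..b}) = measure M {x - e<..<x + e} + measure M {0..b}"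
      using disj assms(2) by (intro finite_measure_Union) auto
    moreover have "measure M ({x - e<..<x + e} \<union> {0..b}) \<le> 1" by (rule prob_le_1)
    moreover have "measure M {x - e<..<x + e} > 0" using x e0 unfolding supp_def by auto
    ultimately show False using assms(3) by linarith
  qed
qed

lemma supp_nonempty:
  assumes "prob_space M" "sets M = sets borel" "measure M {0..b} = 1"
  shows "supp M \<noteq> {}"
  using supp_compact[OF assms(1,2), of "{0..b}"] assms(3) by auto

lemma supp_single:
  assumes "prob_space M" "sets M = sets borel" "measure M {0..b} = 1"
    and "Inf (supp M) = Sup (supp M)"
  shows "supp M = {Inf (supp M)}"
proof -
  have ne: "supp M \<noteq> {}" by (rule supp_nonempty[OF assms(1-3)])
  have sub: "supp M \<subseteq> {0..b}" by (rule supp_sub[OF assms(1-3)])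
  have bb1: "bdd_below (supp M)" using sub by (intro bdd_belowI[of _ 0]) auto
  have bb2: "bdd_above (supp M)" using sub by (intro bdd_aboveI[of _ b]) auto
  note bb = bb1 bb2
  have "\<And>x. x \<in> supp M \<Longrightarrow> x = Inf (supp M)"
    using cInf_lower[OF _ bb(1)] cSup_upper[OF _ bb(2)] assms(4) by force
  then show ?thesis using ne by auto
qed

lemma AE_single:
  assumes "prob_space M" "sets M = sets borel" "measure M {0..b} = 1"
    and "supp M = {c}"
  shows "AE x in M. x = c"
proof -
  interpret prob_space M by fact
  have a0: "AE x in M. x \<in> {0..b}"
    using assms(1-3) prob_space.AE_prob_1 by (metis)
  have "\<And>n::nat. AE x in M. x \<notin> {0..b} \<inter> {y. \<bar>y - c\<bar> \<ge> 1/(Suc n)}"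
  proof -
    fix n :: nat
    let ?K = "{0..b} \<inter> {y. \<bar>y - c\<bar> \<ge> 1/(Suc n)}"
    have cl: "closed {y::real. \<bar>y - c\<bar> \<ge> 1/(Suc n)}"
      by (intro closed_Collect_le continuous_intros)
    have "compact ?K" by (intro compact_Int_closed cl) auto
    moreover have "?K \<inter> supp M = {}" using assms(4) by auto
    ultimately have "measure M ?K = 0" by (intro supp_compact[OF assms(1,2)])
    moreover have "?K \<in> sets M" using assms(2) cl by auto
    ultimately have "?K \<in> null_sets M" by (simp add: emeasure_eq_measure null_setsI)
    then show "AE x in M. x \<notin> ?K" using AE_iff_null_sets \<open>?K \<in> sets M\<close> by blast
  qed
  then have "AE x in M. \<forall>n::nat. x \<notin> {0..b} \<inter> {y. \<bar>y - c\<bar> \<ge> 1/(Suc n)}"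
    by (subst AE_all_countable) blast
  with a0 show ?thesis
  proof eventually_elim
    case (elim x)
    show "x = c"
    proof (rule ccontr)
      assume "x \<noteq> c"
      then have "\<bar>x - c\<bar> > 0" by auto
      then obtain n :: nat where "1 / Suc n < \<bar>x - c\<bar>"
        using nat_approx_posE by blast
      then show False using elim by (metis IntI less_eq_real_def mem_Collect_eq)
    qed
  qed
qed

lemma integral_AE_const:
  fixes g :: "real \<Rightarrow> real"
  assumes "prob_space M" "AE x in M. x = c" "g \<in> borel_measurable M"
  shows "(\<integral>x. g x \<partial>M) = g c"
proof -
  interpret prob_space M by fact
  have "(\<integral>x. g x \<partial>M) = (\<integral>x. g c \<partial>M)"
    using assms(2,3) by (intro integral_cong_AE) (auto elim: eventually_mono)
  then show ?thesis by (simp add: prob_space)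
qed

lemma win_range: "0 \<le> win B v k x y \<and> win B v k x y \<le> 1"
  unfolding win_def by auto

lemma util_meas: "(\<lambda>z. util B v k (fst z) (snd z)) \<in> borel_measurable (borel \<Otimes>\<^sub>M borel)"
  unfolding util_def win_def by measurable

lemma util_meas1: "(\<lambda>x. util B v k x y) \<in> borel_measurable borel"
  unfolding util_def win_def by measurable

lemma util_meas2: "(\<lambda>y. util B v k x y) \<in> borel_measurable borel"
  unfolding util_def win_def by measurable

lemma AE_of_meas1:
  assumes "prob_space P" "sets P = sets borel" "measure P A = 1" "A \<in> sets borel"
  shows "AE x in P. x \<in> A"
  using assms prob_space.AE_prob_1 by (metis)

lemma exp_util_iter:
  assumes P: "prob_space P" "sets P = sets borel" "measure P {0..b} = 1"
    and Q: "prob_space Q" "sets Q = sets borel"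
  shows "exp_util B v k P Q = (\<integral>x. (\<integral>y. util B v k x y \<partial>Q) \<partial>P)"
proof -
  interpret PQ: pair_prob_space P Q
    using P Q by (simp add: pair_prob_space_def pair_sigma_finite_def prob_space_imp_sigma_finite)
  have sets: "sets (P \<Otimes>\<^sub>M Q) = sets (borel \<Otimes>\<^sub>M borel)"
    using P Q by (intro sets_pair_measure_cong) auto
  have meas: "(\<lambda>z. util B v k (fst z) (snd z)) \<in> borel_measurable (P \<Otimes>\<^sub>M Q)"
    using util_meas measurable_cong_sets[OF sets refl] by blast
  have aeP: "AE x in P. x \<in> {0..b}"
    using AE_of_meas1[OF P] by simp
  have "AE z in P \<Otimes>\<^sub>M Q. norm (util B v k (fst z) (snd z)) \<le> \<bar>v k\<bar> + b"
  proof (rule PQ.AE_pair_measure)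
    show "{x \<in> space (P \<Otimes>\<^sub>M Q). norm (util B v k (fst x) (snd x)) \<le> \<bar>v k\<bar> + b} \<in> sets (P \<Otimes>\<^sub>M Q)"
      using meas by measurable
    show "AE x in P. AE y in Q. norm (util B v k (fst (x, y)) (snd (x, y))) \<le> \<bar>v k\<bar> + b"
      using aeP
    proof eventually_elim
      case (elim x)
      show ?case
      proof (rule AE_I2)
        fix y
        have "\<bar>v k * win B v k x y\<bar> \<le> \<bar>v k\<bar>"
          using win_range[of B v k x y] by (simp add: abs_mult mult_left_le)
        then show "norm (util B v k (fst (x, y)) (snd (x, y))) \<le> \<bar>v k\<bar> + b"
          using elim unfolding util_def by auto
      qed
    qed
  qed
  then have "integrable (P \<Otimes>\<^sub>M Q) (\<lambda>z. util B v k (fst z) (snd z))"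
    using meas by (intro PQ.P.integrable_const_bound) auto
  from PQ.integral_fst'[OF this] show ?thesis
    unfolding exp_util_def by simp
qed

lemma exp_util_const_right:
  assumes P: "prob_space P" "sets P = sets borel" "measure P {0..b} = 1"
    and Q: "prob_space Q" "sets Q = sets borel" "AE y in Q. y = c"
  shows "exp_util B v k P Q = (\<integral>x. util B v k x c \<partial>P)"
proof -
  have "exp_util B v k P Q = (\<integral>x. (\<integral>y. util B v k x y \<partial>Q) \<partial>P)"
    by (rule exp_util_iter[OF P Q(1,2)])
  also have "\<dots> = (\<integral>x. util B v k x c \<partial>P)"
    using integral_AE_const[OF Q(1,3)] util_meas2 measurable_cong_sets[OF Q(2) refl]
    by (intro Bochner_Integration.integral_cong refl) blast
  finally show ?thesis .
qed

lemma inner_meas: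
  assumes Q: "prob_space Q" "sets Q = sets borel"
  shows "(\<lambda>y. \<integral>x. util B v k y x \<partial>Q) \<in> borel_measurable borel"
proof -
  interpret Q: prob_space Q by fact
  have sets: "sets (borel \<Otimes>\<^sub>M Q) = sets (borel \<Otimes>\<^sub>M borel)"
    using Q by (intro sets_pair_measure_cong) auto
  have meas: "(\<lambda>z. util B v k (fst z) (snd z)) \<in> borel_measurable (borel \<Otimes>\<^sub>M Q)"
    using util_meas measurable_cong_sets[OF sets refl] by blast
  show ?thesis
    by (rule Q.borel_measurable_lebesgue_integral) (use meas in \<open>simp add: case_prod_beta'\<close>)
qed

lemma return_mixed:
  fixes y b :: real
  assumes "y \<in> {0..b}"
  shows "prob_space (return borel y) \<and> sets (return borel y) = sets borel \<and> measure (return borel y) {0..b} = 1"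
proof -
  have "measure (return borel y) {0..b} = indicator {0..b} y"
    by (rule measure_return) (rule borel_closed, rule closed_atLeastAtMost)
  then show ?thesis using assms by (simp add: prob_space_return)
qed

lemma exp_util_return_left:
  assumes y: "y \<in> {0..b}" and Q: "prob_space Q" "sets Q = sets borel"
  shows "exp_util B v k (return borel y) Q = (\<integral>x. util B v k y x \<partial>Q)"
proof -
  have r: "prob_space (return borel y)" "sets (return borel y) = sets borel" "measure (return borel y) {0..b} = 1"
    using return_mixed[OF y] by auto
  show ?thesis
    unfolding exp_util_iter[OF r Q]
    by (rule integral_return) (auto intro: inner_meas[OF Q])
qed

lemma exp_util_AE_left:
  assumes P: "prob_space P" "sets P = sets borel" "measure P {0..b} = 1" "AE y in P. y = c"
    and Q: "prob_space Q" "sets Q = sets borel"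
  shows "exp_util B v k P Q = (\<integral>x. util B v k c x \<partial>Q)"
  unfolding exp_util_iter[OF P(1-3) Q]
  by (rule integral_AE_const[OF P(1,4)]) (use inner_meas[OF Q] P(2) measurable_cong_sets in blast)

lemma integral_two_point:
  fixes g :: "real \<Rightarrow> real"
  assumes "prob_space M" "sets M = sets borel" "AE x in M. x \<in> {a, c}" "a \<noteq> c"
    and g: "g \<in> borel_measurable borel"
  shows "(\<integral>x. g x \<partial>M) = measure M {a} * g a + measure M {c} * g c"
    and "measure M {a} + measure M {c} = 1"
proof -
  interpret prob_space M by fact
  have sp: "space M = UNIV" using assms(2) sets_eq_imp_space_eq by fastforce
  have gm: "g \<in> borel_measurable M" using g assms(2) measurable_cong_sets by blast
  have hb: "(\<lambda>x. indicator {a} x * g a + indicator {c} x * g c :: real) \<in> borel_measurable borel"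
    by measurable
  have hm: "(\<lambda>x. indicator {a} x * g a + indicator {c} x * g c :: real) \<in> borel_measurable M"
    using hb assms(2) measurable_cong_sets by blast
  have ae: "AE x in M. g x = indicator {a} x * g a + indicator {c} x * g c"
    using assms(3)
  proof eventually_elim
    case (elim x)
    then show ?case using assms(4) by (auto simp: indicator_def)
  qed
  have "(\<integral>x. g x \<partial>M) = (\<integral>x. indicator {a} x * g a + indicator {c} x * g c \<partial>M)"
    by (rule integral_cong_AE[OF gm hm ae])
  also have "\<dots> = measure M {a} * g a + measure M {c} * g c"
  proof -
    have ia: "integrable M (\<lambda>x. indicator {a} x * g a)"
      apply (rule integrable_mult_left)
      apply (rule integrable_real_indicator)
      using assms(2) by (auto simp: emeasure_eq_measure)
    have ic: "integrable M (\<lambda>x. indicator {c} x * g c)"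
      apply (rule integrable_mult_left)
      apply (rule integrable_real_indicator)
      using assms(2) by (auto simp: emeasure_eq_measure)
    have "(\<integral>x. indicator {a} x * g a + indicator {c} x * g c \<partial>M)
        = (\<integral>x. indicator {a} x * g a \<partial>M) + (\<integral>x. indicator {c} x * g c \<partial>M)"
      by (rule Bochner_Integration.integral_add[OF ia ic])
    also have "(\<integral>x. indicator {a} x * g a \<partial>M) = (\<integral>x. indicator {a} x \<partial>M) * g a"
      by (rule integral_mult_left_zero)
    also have "(\<integral>x. indicator {c} x * g c \<partial>M) = (\<integral>x. indicator {c} x \<partial>M) * g c"
      by (rule integral_mult_left_zero)
    also have "(\<integral>x. indicator {a} x \<partial>M) = measure M {a}"
      by (simp add: sp)
    also have "(\<integral>x. indicator {c} x \<partial>M) = measure M {c}"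
      by (simp add: sp)
    finally show ?thesis .
  qed
  finally show "(\<integral>x. g x \<partial>M) = measure M {a} * g a + measure M {c} * g c" .
  have s1: "{a, c} \<in> sets M" "space M \<in> sets M" "{a} \<in> sets M" "{c} \<in> sets M"
    using assms(2) by auto
  have "measure M {a, c} = measure M (space M)"
    by (rule measure_eq_AE[OF _ s1(1,2)]) (use assms(3) sp in simp)
  moreover have "measure M ({a} \<union> {c}) = measure M {a} + measure M {c}"
    by (rule finite_measure_Union[OF s1(3,4)]) (use assms(4) in simp)
  moreover have "{a} \<union> {c} = {a, c}" by auto
  ultimately show "measure M {a} + measure M {c} = 1" using prob_space by simp
qed



lemma win_gt: "y < x \<Longrightarrow> win B v k x y = 1" unfolding win_def by auto
lemma win_lt: "x < y \<Longrightarrow> win B v k x y = 0" unfolding win_def by auto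

lemma sub2: "S \<subseteq> {a, b} \<Longrightarrow> S = {} \<or> S = {a} \<or> S = {b} \<or> S = {a, b}"
  by blast

lemma Lval_le: "k \<in> {1,2} \<Longrightarrow> Lval B v \<le> min (B k) (v k)"
  unfolding Lval_def by auto

lemma null_measure0:
  assumes "sets M = sets borel" "AE x in M. x \<notin> N" "N \<in> sets borel"
  shows "measure M N = 0"
proof -
  have "N \<in> sets M" using assms by simp
  then have "N \<in> null_sets M" using AE_iff_null_sets assms(2) by blast
  then show ?thesis by (simp add: null_setsD1 measure_def)
qed

theorem lemma3:
  fixes B v :: "nat \<Rightarrow> real" and F :: "nat \<Rightarrow> real measure" and i :: nat
  assumes "B 1 \<ge> 0" and "B 2 \<ge> 0" and "v 1 > 0" and "v 2 > 0"
    and "nash_eq B v F"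
    and "i \<in> {1, 2}"
    and "Inf (supp (F i)) < Sup (supp (F i))"
    and "Inf (supp (F (opp i))) = Sup (supp (F (opp i)))"
  shows "supp (F i) = {0, Lval B v}
    \<and> cdf_of (F i) 0 \<le> 1 - 2 * Lval B v / v (opp i)
    \<and> exp_util B v i (F i) (F (opp i)) = 0
    \<and> exp_util B v (opp i) (F (opp i)) (F i) \<le> v (opp i) - 2 * Lval B v"
proof -
  define j where "j = opp i"
  have j: "j \<in> {1,2}" "opp j = i" "j \<noteq> i" using assms(6) by (auto simp: j_def opp_def)
  have Bi: "B i \<ge> 0" "v i > 0" using assms(1-4,6) by auto
  have Bj: "B j \<ge> 0" "v j > 0" using assms(1-4) j(1) by auto
  have msi: "mixed_strategy B i (F i)"
    and bri: "\<And>G. mixed_strategy B i G \<Longrightarrow> exp_util B v i G (F j) \<le> exp_util B v i (F i) (F j)"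
    using assms(5,6) unfolding nash_eq_def j_def by auto
  have msj: "mixed_strategy B j (F j)"
    and brj: "\<And>G. mixed_strategy B j G \<Longrightarrow> exp_util B v j G (F i) \<le> exp_util B v j (F j) (F i)"
    using assms(5) j unfolding nash_eq_def by auto
  have G: "prob_space (F i)" "sets (F i) = sets borel" "measure (F i) {0..B i} = 1"
    using msi unfolding mixed_strategy_def by auto
  have H: "prob_space (F j)" "sets (F j) = sets borel" "measure (F j) {0..B j} = 1"
    using msj unfolding mixed_strategy_def by auto
  interpret PG: prob_space "F i" by (rule G(1))
  define c where "c = Inf (supp (F j))"
  have suppH: "supp (F j) = {c}"
    unfolding c_def by (rule supp_single[OF H]) (use assms(8) j_def in simp)
  have c_range: "0 \<le> c" "c \<le> B j" using supp_sub[OF H] suppH by auto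
  have aeH: "AE y in F j. y = c" by (rule AE_single[OF H suppH])
  define f where "f x = util B v i x c" for x
  define U where "U = exp_util B v i (F i) (F j)"
  have U_eq: "U = (\<integral>x. f x \<partial>F i)"
    unfolding U_def f_def by (rule exp_util_const_right[OF G H(1,2) aeH])
  have dev: "f x \<le> U" if x: "x \<in> {0..B i}" for x
  proof -
    have "mixed_strategy B i (return borel x)"
      using return_mixed[OF x] unfolding mixed_strategy_def by auto
    then have "exp_util B v i (return borel x) (F j) \<le> U" unfolding U_def by (rule bri)
    moreover have "exp_util B v i (return borel x) (F j) = f x"
      unfolding exp_util_return_left[OF x H(1,2)] f_def
      by (rule integral_AE_const[OF H(1) aeH]) (use util_meas2 H(2) measurable_cong_sets in blast)
    ultimately show ?thesis by simp
  qed
  have f0: "f 0 \<ge> 0" unfolding f_def util_def using win_range[of B v i 0 c] Bi by simp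
  have U0: "U \<ge> 0" using dev[of 0] f0 Bi by simp
  have fm: "f \<in> borel_measurable (F i)"
    unfolding f_def using util_meas1 G(2) measurable_cong_sets by blast
  have aeGi: "AE x in F i. x \<in> {0..B i}" using AE_of_meas1[OF G] by simp
  have fint: "integrable (F i) f"
  proof (rule PG.integrable_const_bound[where B="v i + B i"])
    show "AE x in F i. norm (f x) \<le> v i + B i"
      using aeGi
    proof eventually_elim
      case (elim x)
      have "\<bar>v i * win B v i x c\<bar> \<le> v i"
        using win_range[of B v i x c] Bi by (simp add: abs_mult mult_left_le)
      then show ?case using elim unfolding f_def util_def by auto
    qed
  qed (rule fm)
  have aeA: "AE x in F i. f x = U"
  proof -
    have int2: "integrable (F i) (\<lambda>x. U - f x)" using fint by auto
    have nn: "AE x in F i. 0 \<le> U - f x" using aeGi by eventually_elim (use dev in auto)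
    have "(\<integral>x. U - f x \<partial>F i) = 0"
      using fint U_eq by (simp add: Bochner_Integration.integral_diff PG.prob_space)
    then have "AE x in F i. U - f x = 0" using integral_nonneg_eq_0_iff_AE[OF int2 nn] by simp
    then show ?thesis by eventually_elim simp
  qed
  have key: "x = 0 \<or> x = c" if x: "x \<in> {0..B i}" and fx: "f x = U" for x
  proof (rule ccontr)
    assume nx: "\<not> (x = 0 \<or> x = c)"
    show False
    proof (cases "x < c")
      case True
      then have "f x = - x" unfolding f_def util_def by (simp add: win_lt)
      then show False using nx x fx U0 by auto
    next
      case False
      then have xc: "c < x" using nx by auto
      define x' where "x' = (x + c) / 2"
      have x': "x' \<in> {0..B i}" "c < x'" "x' < x" using x xc c_range unfolding x'_def by auto
      have "f x = v i - x" using xc unfolding f_def util_def by (simp add: win_gt)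
      moreover have "f x' = v i - x'" using x' unfolding f_def util_def by (simp add: win_gt)
      ultimately show False using dev[OF x'(1)] fx x'(3) by simp
    qed
  qed
  have aeG: "AE x in F i. x \<in> {0, c}"
    using aeA aeGi by eventually_elim (use key in auto)
  have suppG_sub: "supp (F i) \<subseteq> {0, c}"
  proof
    fix x assume xs: "x \<in> supp (F i)"
    show "x \<in> {0, c}"
    proof (rule ccontr)
      assume nx: "x \<notin> {0, c}"
      define e where "e = min \<bar>x\<bar> \<bar>x - c\<bar>"
      have e0: "e > 0" using nx unfolding e_def by auto
      have ex: "e \<le> \<bar>x\<bar>" "e \<le> \<bar>x - c\<bar>" unfolding e_def by simp_all
      have "AE y in F i. y \<notin> {x - e<..<x + e}"
        using aeG
      proof eventually_elim
        case (elim y)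
        then have "y = 0 \<or> y = c" by simp
        then have "e \<le> \<bar>x - y\<bar>" using ex by (metis abs_minus_commute diff_0_right abs_minus_cancel)
        then show ?case by auto
      qed
      then have "measure (F i) {x - e<..<x + e} = 0"
        by (intro null_measure0[OF G(2)]) auto
      then show False using xs e0 unfolding supp_def by auto
    qed
  qed
  have suppG: "supp (F i) = {0, c}" and c0: "c > 0"
  proof -
    have "supp (F i) = {} \<or> supp (F i) = {0} \<or> supp (F i) = {c} \<or> supp (F i) = {0, c}"
      by (rule sub2[OF suppG_sub])
    then have "supp (F i) = {0, c}"
      using assms(7) supp_nonempty[OF G] by (elim disjE) simp_all
    moreover have "c \<noteq> 0"
    proof
      assume "c = 0"
      then have "supp (F i) = {0}" using calculation by simp
      then show False using assms(7) by simp
    qed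
    ultimately show "supp (F i) = {0, c}" "c > 0" using c_range by auto
  qed
  define p where "p = measure (F i) {0}"
  define q where "q = measure (F i) {c}"
  have pq: "p + q = 1" unfolding p_def q_def by (rule integral_two_point(2)[OF G(1,2) aeG]) (use c0 util_meas1 in auto)
  have p0: "p > 0"
  proof -
    have "(0::real) \<in> supp (F i)" using suppG by simp
    then have "measure (F i) {0 - c<..<0 + c} > 0" using c0 unfolding supp_def by blast
    moreover have "measure (F i) {0 - c<..<0 + c} = p" unfolding p_def
      by (rule measure_eq_AE) (use aeG c0 G(2) in \<open>auto elim!: eventually_mono\<close>)
    ultimately show ?thesis by simp
  qed
  have q0: "q > 0"
  proof -
    have "c \<in> supp (F i)" using suppG by simp
    then have "measure (F i) {c - c<..<c + c} > 0" using c0 unfolding supp_def by blast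
    moreover have "measure (F i) {c - c<..<c + c} = q" unfolding q_def
      by (rule measure_eq_AE) (use aeG c0 G(2) in \<open>auto elim!: eventually_mono\<close>)
    ultimately show ?thesis by simp
  qed
  have fU0: "f 0 = U"
  proof (rule ccontr)
    assume ne: "f 0 \<noteq> U"
    have "AE x in F i. x \<notin> {0}" using aeA by eventually_elim (use ne in auto)
    then have "p = 0" unfolding p_def by (intro null_measure0[OF G(2)]) auto
    then show False using p0 by simp
  qed
  have fUc: "f c = U"
  proof (rule ccontr)
    assume ne: "f c \<noteq> U"
    have "AE x in F i. x \<notin> {c}" using aeA by eventually_elim (use ne in auto)
    then have "q = 0" unfolding q_def by (intro null_measure0[OF G(2)]) auto
    then show False using q0 by simp
  qed
  have U00: "U = 0" using fU0 c0 unfolding f_def util_def by (simp add: win_lt)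
  define w where "w = win B v i c c"
  have wc: "v i * w = c" using fUc U00 unfolding f_def util_def w_def by simp
  have cBi: "c = B i \<or> v i \<le> c"
  proof (rule ccontr)
    assume "\<not> (c = B i \<or> v i \<le> c)"
    then have h: "c < B i" "c < v i" using supp_sub[OF G] suppG by auto
    define x' where "x' = min (B i) ((c + v i) / 2)"
    have x': "x' \<in> {0..B i}" "c < x'" "x' < v i" using h c_range unfolding x'_def by (auto simp: min_def)
    have "f x' = v i - x'" using x' unfolding f_def util_def by (simp add: win_gt)
    then show False using dev[OF x'(1)] U00 x'(3) by simp
  qed
  have w_cases: "w = 1 \<and> c = Lval B v \<and> min (B i) (v i) > min (B j) (v j)
      \<or> w = 0 \<or> (w = 1/2 \<and> \<not> (c = Lval B v \<and> min (B i) (v i) > min (B j) (v j))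
           \<and> \<not> (c = Lval B v \<and> min (B j) (v j) > min (B i) (v i)))"
    unfolding w_def win_def j_def by auto
  have w_half: "w = 1/2" and tie: "\<not> (c = Lval B v \<and> min (B i) (v i) > min (B j) (v j))"
      "\<not> (c = Lval B v \<and> min (B j) (v j) > min (B i) (v i))"
  proof -
    have "w \<noteq> 0" using wc c0 by auto
    moreover have "\<not> (w = 1 \<and> c = Lval B v \<and> min (B i) (v i) > min (B j) (v j))"
    proof
      assume a: "w = 1 \<and> c = Lval B v \<and> min (B i) (v i) > min (B j) (v j)"
      then have "c = v i" using wc by simp
      moreover have "Lval B v \<le> min (B j) (v j)" using Lval_le j(1) by blast
      ultimately show False using a by auto
    qed
    ultimately show "w = 1/2" "\<not> (c = Lval B v \<and> min (B i) (v i) > min (B j) (v j))"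
      "\<not> (c = Lval B v \<and> min (B j) (v j) > min (B i) (v i))" using w_cases by auto
  qed
  have c_vi: "v i = 2 * c" using wc w_half by simp
  have c_Bi: "c = B i" using cBi c_vi c0 by auto
  have wj: "win B v j c c = 1/2" using tie unfolding win_def j(2) by auto
  define V where "V = exp_util B v j (F j) (F i)"
  have V_eq: "V = p * (v j - c) + q * (v j / 2 - c)"
  proof -
    have "V = (\<integral>x. util B v j c x \<partial>F i)"
      unfolding V_def by (rule exp_util_AE_left[OF H aeH G(1,2)])
    also have "\<dots> = p * util B v j c 0 + q * util B v j c c"
      unfolding p_def q_def by (rule integral_two_point(1)[OF G(1,2) aeG]) (use c0 util_meas2 in auto)
    also have "\<dots> = p * (v j - c) + q * (v j / 2 - c)"
      using c0 wj unfolding util_def by (simp add: win_gt)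
    finally show ?thesis .
  qed
  have devj: "p * (v j - y) + q * (0 - y) \<le> V" if y: "0 < y" "y < c" for y
  proof -
    have yr: "y \<in> {0..B j}" using y c_range by auto
    have "mixed_strategy B j (return borel y)"
      using return_mixed[OF yr] unfolding mixed_strategy_def by auto
    then have "exp_util B v j (return borel y) (F i) \<le> V" unfolding V_def by (rule brj)
    moreover have "exp_util B v j (return borel y) (F i) = p * util B v j y 0 + q * util B v j y c"
      unfolding exp_util_return_left[OF yr G(1,2)] p_def q_def
      by (rule integral_two_point(1)[OF G(1,2) aeG]) (use c0 util_meas2 in auto)
    moreover have "util B v j y 0 = v j - y" "util B v j y c = 0 - y"
      using y unfolding util_def by (simp_all add: win_gt win_lt)
    ultimately show ?thesis by simp
  qed
  have qv: "2 * c \<le> q * v j"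
  proof (rule ccontr)
    assume "\<not> 2 * c \<le> q * v j"
    then have h: "q * v j / 2 < c" by simp
    define y where "y = min (c / 2) ((c - q * v j / 2) / 2)"
    have y: "0 < y" "y < c" "y < c - q * v j / 2" using h c0 unfolding y_def by (auto simp: min_def)
    have "p * (v j - y) + q * (0 - y) = p * v j - y" using pq by algebra
    moreover have "V = p * v j + q * v j / 2 - c" using V_eq pq by algebra
    ultimately show False using devj[OF y(1,2)] y(3) by simp
  qed
  have c_Bj: "c = B j"
  proof (rule ccontr)
    assume "c \<noteq> B j"
    then have h: "c < B j" using c_range by simp
    define y where "y = min (B j) (c + q * v j / 4)"
    have qvp: "q * v j > 0" using q0 Bj by simp
    have y: "y \<in> {0..B j}" "c < y" "y \<le> c + q * v j / 4" using h c0 qvp unfolding y_def by (auto simp: min_def)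
    have "mixed_strategy B j (return borel y)"
      using return_mixed[OF y(1)] unfolding mixed_strategy_def by auto
    then have le: "exp_util B v j (return borel y) (F i) \<le> V" unfolding V_def by (rule brj)
    have E: "exp_util B v j (return borel y) (F i) = p * util B v j y 0 + q * util B v j y c"
      unfolding exp_util_return_left[OF y(1) G(1,2)] p_def q_def
      by (rule integral_two_point(1)[OF G(1,2) aeG]) (use c0 util_meas2 in auto)
    have u1: "util B v j y 0 = v j - y" "util B v j y c = v j - y"
      using y c0 unfolding util_def by (simp_all add: win_gt)
    have p1: "p = 1 - q" using pq by simp
    have V2: "V = v j - q * v j / 2 - c" using V_eq unfolding p1 by (simp add: algebra_simps)
    have "p * (v j - y) + q * (v j - y) = (p + q) * (v j - y)" by (simp add: distrib_right)
    then have s1: "p * (v j - y) + q * (v j - y) = v j - y" using pq by simp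
    have "v j - y \<le> v j - q * v j / 2 - c" using le E u1 s1 V2 by simp
    then show False using y(3) qvp by linarith
  qed
  have q1: "q \<le> 1" using pq p0 by simp
  have vj: "v j \<ge> 2 * c"
  proof -
    have "q * v j \<le> v j" using q1 Bj by (simp add: mult_left_le_one_le)
    then show ?thesis using qv by simp
  qed
  have L: "Lval B v = c"
    using assms(6) j c_Bi c_Bj c_vi vj c0 unfolding Lval_def j_def opp_def by auto
  have cdf: "cdf_of (F i) 0 = p"
    unfolding cdf_of_def p_def
    by (rule measure_eq_AE) (use aeG c0 G(2) in \<open>auto elim!: eventually_mono\<close>)
  have "2 * c / v j \<le> q" using qv Bj by (simp add: pos_divide_le_eq mult.commute)
  then have r2: "cdf_of (F i) 0 \<le> 1 - 2 * Lval B v / v j" using cdf pq L by simp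
  have p1: "p = 1 - q" using pq by simp
  have V3: "V = v j - q * v j / 2 - c" using V_eq unfolding p1 by (simp add: algebra_simps)
  have r4: "V \<le> v j - 2 * Lval B v" using V3 qv L by linarith
  show ?thesis using suppG L r2 U00 r4 unfolding U_def V_def j_def by simp
qed

end
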